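(* For every integer $T\ge 5$ and every $\sigma\in\mathfrak S_3$, the vector $\sigma c$ with $c=[1,0,0,0,0,0]$ defines a facet of $P^T$.
   Context: For an integer $T\ge 2$, let $\Omega_T$ be the set of words $w=s_1s_2\cdots s_T$ over $\{1,2,3\}$ with $s_l\neq s_{l+1}$ for $l=1,\dots,T-1$. For $w\in\Omega_T$ and an ordered pair $ij$, $i\neq j$, let $x_{ij}(w)$ be the number of indices $1\le l\le T-1$ with $s_ls_{l+1}=ij$. Vectors of $\mathbb R^6$ are indexed in the order $[x_{12},x_{13},x_{21},x_{23},x_{31},x_{32}]$. Let $a_w=[x_{12}(w),\dots,x_{32}(w)]$ and $P^T=\mathrm{conv}\{a_w:w\in\Omega_T\}$ (the convex hull of the columns of the design matrix $A^T$). $\mathfrak S_3$ acts on $\mathbb R^6$ by $(\sigma c)_{ij}=c_{\sigma(i)\sigma(j)}$. A vector $c$ defines a facet of $P^T$ if $c\cdot a_w\ge0$ for all $w\in\Omega_T$ and $\{x\in P^T: c\cdot x=0\}$ is a facet of $P^T$. *)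

theory Defs
  imports "HOL-Analysis.Analysis"
begin

definition Omega :: "nat \<Rightarrow> nat list set" where
  "Omega T = {w. length w = T \<and> set w \<subseteq> {1,2,3} \<and>
                 (\<forall>l. l + 1 < T \<longrightarrow> w ! l \<noteq> w ! (l + 1))}"

definition xcount :: "nat list \<Rightarrow> nat \<Rightarrow> nat \<Rightarrow> nat" where
  "xcount w i j = card {l. l + 1 < length w \<and> w ! l = i \<and> w ! (l + 1) = j}"

definition avec :: "nat list \<Rightarrow> real^6" where
  "avec w = vector [real (xcount w 1 2), real (xcount w 1 3), real (xcount w 2 1),
                    real (xcount w 2 3), real (xcount w 3 1), real (xcount w 3 2)]"

definition PT :: "nat \<Rightarrow> (real^6) set" where
  "PT T = convex hull (avec ` Omega T)"

definition coord :: "real^6 \<Rightarrow> nat \<Rightarrow> nat \<Rightarrow> real" where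
  "coord c i j =
     (if (i, j) = (1, 2) then c $ 1 else
      if (i, j) = (1, 3) then c $ 2 else
      if (i, j) = (2, 1) then c $ 3 else
      if (i, j) = (2, 3) then c $ 4 else
      if (i, j) = (3, 1) then c $ 5 else
      if (i, j) = (3, 2) then c $ 6 else 0)"

definition act :: "(nat \<Rightarrow> nat) \<Rightarrow> real^6 \<Rightarrow> real^6" where
  "act \<sigma> c = vector [coord c (\<sigma> 1) (\<sigma> 2), coord c (\<sigma> 1) (\<sigma> 3), coord c (\<sigma> 2) (\<sigma> 1),
                      coord c (\<sigma> 2) (\<sigma> 3), coord c (\<sigma> 3) (\<sigma> 1), coord c (\<sigma> 3) (\<sigma> 2)]"

definition defines_facet :: "nat \<Rightarrow> real^6 \<Rightarrow> bool" where
  "defines_facet T c \<longleftrightarrow>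
     (\<forall>w\<in>Omega T. c \<bullet> avec w \<ge> 0) \<and> {x \<in> PT T. c \<bullet> x = 0} facet_of PT T"

end

theory Submission imports Defs begin
lemma exhaust_6:
  fixes x :: 6
  shows "x = 1 \<or> x = 2 \<or> x = 3 \<or> x = 4 \<or> x = 5 \<or> x = 6"
proof (induct x)
  case (of_int z)
  then have "z = 0 \<or> z = 1 \<or> z = 2 \<or> z = 3 \<or> z = 4 \<or> z = 5" by fastforce
  then show ?case by auto
qed
lemma forall_6: "(\<forall>i::6. P i) \<longleftrightarrow> P 1 \<and> P 2 \<and> P 3 \<and> P 4 \<and> P 5 \<and> P 6"
  by (metis exhaust_6)
lemma UNIV_6: "UNIV = {1, 2, 3, 4, 5, 6::6}"
  using exhaust_6 by auto
lemma d6: "(1::6) \<noteq> 2"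
  "(1::6) \<noteq> 3"
  "(1::6) \<noteq> 4"
  "(1::6) \<noteq> 5"
  "(1::6) \<noteq> 6"
  "(2::6) \<noteq> 3"
  "(2::6) \<noteq> 4"
  "(2::6) \<noteq> 5"
  "(2::6) \<noteq> 6"
  "(3::6) \<noteq> 4"
  "(3::6) \<noteq> 5"
  "(3::6) \<noteq> 6"
  "(4::6) \<noteq> 5"
  "(4::6) \<noteq> 6"
  "(5::6) \<noteq> 6"
  by simp_all
lemma inner6: "(x::real^6) \<bullet> y = x$1*y$1 + x$2*y$2+x$3*y$3+x$4*y$4+x$5*y$5+x$6*y$6"
proof -
  have "x \<bullet> y = (\<Sum>i\<in>{1,2,3,4,5,6::6}. x$i * y$i)"
    by (simp only: inner_vec_def UNIV_6 inner_real_def)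
  also have "\<dots> = x$1*y$1 + (x$2*y$2+(x$3*y$3+(x$4*y$4+(x$5*y$5+(x$6*y$6+0)))))"
    by (simp only: sum.insert finite_insert finite.emptyI insert_iff empty_iff d6 simp_thms sum.empty)
  finally show ?thesis by (simp only: add.assoc add_0_right)
qed
lemma v6: "(vector [a,b,c,d,e,f] :: real^6) $ 1 = a"
  "(vector [a,b,c,d,e,f] :: real^6) $ 2 = b"
  "(vector [a,b,c,d,e,f] :: real^6) $ 3 = c"
  "(vector [a,b,c,d,e,f] :: real^6) $ 4 = d"
  "(vector [a,b,c,d,e,f] :: real^6) $ 5 = e"
  "(vector [a,b,c,d,e,f] :: real^6) $ 6 = f"
  by (simp_all add: vector_def d6)
lemma vec6_eq: "(vector [a,b,c,d,e,f] :: real^6) = vector [a',b',c',d',e',f'] \<longleftrightarrow> a=a' \<and> b=b' \<and> c=c' \<and> d=d' \<and> e=e' \<and> f=f'"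
  by (simp add: vec_eq_iff forall_6 v6)
lemma vec6_add: "(vector [a,b,c,d,e,f] :: real^6) + vector [a',b',c',d',e',f'] = vector [a+a',b+b',c+c',d+d',e+e',f+f']"
  by (simp add: vec_eq_iff forall_6 v6)
lemma vec6_inner: "(vector [a,b,c,d,e,f] :: real^6) \<bullet> vector [a',b',c',d',e',f'] = a*a'+b*b'+c*c'+d*d'+e*e'+f*f'"
  by (simp add: inner6 v6)

fun cnt :: "nat list \<Rightarrow> nat \<Rightarrow> nat \<Rightarrow> nat" where
  "cnt (a # b # r) i j = (if a = i \<and> b = j then 1 else 0) + cnt (b # r) i j"
| "cnt _ i j = 0"

fun nc :: "nat list \<Rightarrow> bool" where
  "nc (a # b # r) = (a \<noteq> b \<and> nc (b # r))"
| "nc _ = True"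

lemma all_nat_split: "(\<forall>l::nat. P l) = (P 0 \<and> (\<forall>m. P (Suc m)))"
  by (metis not0_implies_Suc)

lemma xcount_cnt: "xcount w i j = cnt w i j"
proof (induction w i j rule: cnt.induct)
  case (1 a b r i j)
  let ?A = "{l. l + 1 < length (b#r) \<and> (b#r) ! l = i \<and> (b#r) ! (l + 1) = j}"
  have eq: "{l. l + 1 < length (a#b#r) \<and> (a#b#r) ! l = i \<and> (a#b#r) ! (l + 1) = j}
     = {l\<in>{0::nat}. a = i \<and> b = j} \<union> Suc ` ?A"
  proof (rule set_eqI)
    fix l show "l \<in> {l. l + 1 < length (a#b#r) \<and> (a#b#r) ! l = i \<and> (a#b#r) ! (l + 1) = j}
     \<longleftrightarrow> l \<in> {l\<in>{0::nat}. a = i \<and> b = j} \<union> Suc ` ?A"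
    proof (cases l)
      case 0 then show ?thesis by simp
    next
      case (Suc m)
      have "Suc m \<in> Suc ` ?A \<longleftrightarrow> m \<in> ?A" by (rule inj_image_mem_iff) simp
      then show ?thesis using Suc by simp
    qed
  qed
  have fin: "finite ?A" by (rule finite_subset[of _ "{..<length (b#r)}"]) auto
  have "xcount (a#b#r) i j = card ({l\<in>{0::nat}. a = i \<and> b = j} \<union> Suc ` ?A)"
    unfolding xcount_def eq ..
  also have "\<dots> = card {l\<in>{0::nat}. a = i \<and> b = j} + card (Suc ` ?A)"
    using fin by (intro card_Un_disjoint) auto
  also have "\<dots> = (if a = i \<and> b = j then 1 else 0) + xcount (b#r) i j"
    by (simp add: card_image xcount_def)
  finally show ?case using 1 by simp
next
  case ("2_1" i j) then show ?case by (simp add: xcount_def)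
next
  case ("2_2" v i j) then show ?case by (simp add: xcount_def)
qed

lemma nc_iff: "nc w \<longleftrightarrow> (\<forall>l. l + 1 < length w \<longrightarrow> w ! l \<noteq> w ! (l + 1))"
proof (induction w rule: nc.induct)
  case (1 a b r)
  show ?case
    apply (subst all_nat_split)
    using 1 by simp
qed auto

lemma Omega_iff: "w \<in> Omega T \<longleftrightarrow> length w = T \<and> set w \<subseteq> {1,2,3} \<and> nc w"
  by (auto simp: Omega_def nc_iff)

lemma cnt_append: "cnt (p @ s # r) i j = cnt (p @ [s]) i j + cnt (s # r) i j"
proof (induction p)
  case (Cons a p) then show ?case by (cases p) auto
qed simp

lemma nc_append: "nc (p @ s # r) \<longleftrightarrow> nc (p @ [s]) \<and> nc (s # r)"
proof (induction p)
  case (Cons a p) then show ?case by (cases p) auto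
qed simp

fun alt :: "nat \<Rightarrow> nat \<Rightarrow> nat \<Rightarrow> nat list" where
  "alt s t 0 = []"
| "alt s t (Suc n) = s # alt t s n"

lemma alt_length: "length (alt s t n) = n"
  by (induction n arbitrary: s t) auto
lemma alt_set: "set (alt s t n) \<subseteq> {s,t}"
  by (induction n arbitrary: s t) auto
lemma alt_nc: "s \<noteq> t \<Longrightarrow> nc (alt s t n)"
proof (induction n arbitrary: s t)
  case (Suc n) then show ?case by (cases n) auto
qed simp
lemma alt_cnt: "\<not>(i=s\<and>j=t) \<Longrightarrow> \<not>(i=t\<and>j=s) \<Longrightarrow> cnt (alt s t n) i j = 0"
proof (induction n arbitrary: s t)
  case (Suc n) then show ?case by (cases n) auto
qed simp

lemma cnt_sum: "set w \<subseteq> {1,2,3} \<Longrightarrow> nc w \<Longrightarrow>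
  cnt w 1 2 + cnt w 1 3 + cnt w 2 1 + cnt w 2 3 + cnt w 3 1 + cnt w 3 2 = length w - 1"
proof (induction w rule: nc.induct)
  case (1 a b r)
  have a: "a = 1 \<or> a = 2 \<or> a = 3" and b: "b = 1 \<or> b = 2 \<or> b = 3" and ab: "a \<noteq> b"
    using 1(2,3) by auto
  have IH: "cnt (b#r) 1 2 + cnt (b#r) 1 3 + cnt (b#r) 2 1 + cnt (b#r) 2 3 + cnt (b#r) 3 1 + cnt (b#r) 3 2 = length r"
    using 1 by simp
  have ind: "(if a = 1 \<and> b = 2 then 1 else 0) + (if a = 1 \<and> b = 3 then 1 else 0) +
    (if a = 2 \<and> b = 1 then 1 else 0) + (if a = 2 \<and> b = 3 then 1 else 0) +
    (if a = 3 \<and> b = 1 then 1 else 0) + (if a = 3 \<and> b = 2 then (1::nat) else 0) = 1"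
    using a b ab by (elim disjE) simp_all
  show ?case using IH ind by (simp split del: if_split)
qed auto

lemma avec_eq: "avec w = vector [real (cnt w 1 2), real (cnt w 1 3), real (cnt w 2 1),
                    real (cnt w 2 3), real (cnt w 3 1), real (cnt w 3 2)]"
  by (simp add: avec_def xcount_cnt)

lemma avec_append: "avec (p @ s # r) = avec (p @ [s]) + avec (s # r)"
  by (simp only: avec_eq vec6_add cnt_append[of p s r] of_nat_add)

lemma facet_crit:
  fixes c :: "real^6"
  assumes nn: "\<forall>w\<in>Omega T. c \<bullet> avec w \<ge> 0"
    and pos: "wz \<in> Omega T" "c \<bullet> avec wz \<noteq> 0"
    and S: "S \<subseteq> avec ` Omega T" "\<forall>x\<in>S. c \<bullet> x = 0" "aff_dim S \<ge> 4"
  shows "defines_facet T c"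
proof -
  define P where "P = PT T"
  define F where "F = {x \<in> P. c \<bullet> x = 0}"
  have cvx: "convex P" unfolding P_def PT_def by simp
  have "P \<subseteq> {x. c \<bullet> x \<ge> 0}" unfolding P_def PT_def
    by (rule hull_minimal) (use nn convex_halfspace_ge in auto)
  then have Pnn: "\<And>x. x \<in> P \<Longrightarrow> (-c) \<bullet> x \<le> 0" by auto
  have "P \<inter> {x. (-c) \<bullet> x = 0} face_of P"
    by (rule face_of_Int_supporting_hyperplane_le[OF cvx Pnn])
  moreover have "P \<inter> {x. (-c) \<bullet> x = 0} = F" unfolding F_def by auto
  ultimately have face: "F face_of P" by simp
  define one :: "real^6" where "one = vector [1,1,1,1,1,1]"
  have one0: "one \<noteq> 0"
  proof
    assume "one = 0"
    then have "one $ 1 = 0" by simp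
    then show False by (simp add: one_def v6)
  qed
  have "avec ` Omega T \<subseteq> {x. one \<bullet> x = real (T - 1)}"
  proof
    fix x assume "x \<in> avec ` Omega T"
    then obtain w where w: "w \<in> Omega T" "x = avec w" by auto
    have "one \<bullet> x = real (cnt w 1 2 + cnt w 1 3 + cnt w 2 1 + cnt w 2 3 + cnt w 3 1 + cnt w 3 2)"
      unfolding one_def w avec_eq vec6_inner by simp
    also have "\<dots> = real (T - 1)" using w cnt_sum[of w] by (simp add: Omega_iff)
    finally show "x \<in> {x. one \<bullet> x = real (T - 1)}" by simp
  qed
  then have "aff_dim (avec ` Omega T) \<le> aff_dim {x. one \<bullet> x = real (T - 1)}"
    by (rule aff_dim_subset)
  also have "\<dots> = 5" using aff_dim_hyperplane[OF one0, of "real (T - 1)"] by simp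
  finally have "aff_dim (avec ` Omega T) \<le> 5" .
  then have P5: "aff_dim P \<le> 5" unfolding P_def PT_def by (simp add: aff_dim_convex_hull)
  have SP: "avec ` Omega T \<subseteq> P" unfolding P_def PT_def by (rule hull_subset)
  have SF: "S \<subseteq> F" using S SP unfolding F_def by auto
  have "avec wz \<in> P" "avec wz \<notin> F" using SP pos unfolding F_def by auto
  then have FP: "F \<noteq> P" by auto
  have lt: "aff_dim F < aff_dim P" by (rule face_of_aff_dim_lt[OF cvx face FP])
  have F4: "aff_dim F \<ge> 4" using aff_dim_subset[OF SF] S(3) by simp
  have Fne: "F \<noteq> {}" using F4 aff_dim_empty[of F] by auto
  have "aff_dim F = aff_dim P - 1" using lt P5 F4 by simp
  then have "F facet_of P" using face Fne by (simp add: facet_of_def)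
  then show ?thesis using nn unfolding defines_facet_def F_def P_def by simp
qed
lemma aff5:
  fixes v1 v2 v3 v4 v5 :: "real^6"
  assumes dist: "distinct [v1,v2,v3,v4,v5]"
    and indep: "\<And>u1 u2 u3 u4 u5. u1+u2+u3+u4+u5 = 0 \<Longrightarrow>
       u1 *\<^sub>R v1 + u2 *\<^sub>R v2 + u3 *\<^sub>R v3 + u4 *\<^sub>R v4 + u5 *\<^sub>R v5 = 0 \<Longrightarrow>
       u1 = 0 \<and> u2 = 0 \<and> u3 = 0 \<and> u4 = 0 \<and> u5 = 0"
  shows "aff_dim {v1,v2,v3,v4,v5} = 4"
proof -
  let ?V = "{v1,v2,v3,v4,v5}"
  have fin: "finite ?V" by simp
  have "\<not> affine_dependent ?V"
  proof
    assume "affine_dependent ?V"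
    then obtain U where U: "sum U ?V = 0" "\<exists>v\<in>?V. U v \<noteq> 0" "(\<Sum>v\<in>?V. U v *\<^sub>R v) = 0"
      using affine_dependent_explicit_finite[OF fin] by blast
    have s1: "sum U ?V = U v1 + U v2 + U v3 + U v4 + U v5"
      using dist by (simp add: add.assoc)
    have s2: "(\<Sum>v\<in>?V. U v *\<^sub>R v) = U v1 *\<^sub>R v1 + U v2 *\<^sub>R v2 + U v3 *\<^sub>R v3 + U v4 *\<^sub>R v4 + U v5 *\<^sub>R v5"
      using dist by (simp add: add.assoc)
    have "U v1 = 0 \<and> U v2 = 0 \<and> U v3 = 0 \<and> U v4 = 0 \<and> U v5 = 0"
      using indep[of "U v1" "U v2" "U v3" "U v4" "U v5"] U(1,3) s1 s2 by simp
    then show False using U(2) by auto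
  qed
  then have "of_nat (card ?V) = aff_dim ?V + 1" by (rule aff_dim_affine_independent)
  moreover have "card ?V = 5" using dist by simp
  ultimately show ?thesis by simp
qed

lemma case_gen:
  fixes c :: "real^6"
  assumes T: "T \<ge> 5"
    and nn: "\<forall>w. 0 \<le> c \<bullet> avec w"
    and tail: "\<And>m. c \<bullet> avec (s # alt t s m) = 0"
    and st: "s \<in> {1,2,3}" "t \<in> {1,2,3}" "s \<noteq> t"
    and pz: "length pz = 4" "set pz \<subseteq> {1,2,3}" "nc (pz @ [s])" "c \<bullet> avec (pz @ [s]) \<noteq> 0"
    and ps: "\<forall>p\<in>set ps. length p = 4 \<and> set p \<subseteq> {1,2,3} \<and> nc (p @ [s]) \<and> c \<bullet> avec (p @ [s]) = 0"
    and aff: "aff_dim ((\<lambda>p. avec (p @ [s])) ` set ps) \<ge> 4"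
  shows "defines_facet T c"
proof -
  define m where "m = T - 5"
  have Tm: "T = m + 5" using T m_def by simp
  define tl where "tl = s # alt t s m"
  have tl_len: "length tl = Suc m" by (simp add: tl_def alt_length)
  have tl_set: "set tl \<subseteq> {1,2,3}" using alt_set[of t s m] st by (auto simp: tl_def)
  have tl_nc: "nc tl" using alt_nc[of s t "Suc m"] st by (simp add: tl_def)
  have word: "p @ tl \<in> Omega T" if "length p = 4" "set p \<subseteq> {1,2,3}" "nc (p @ [s])" for p
  proof -
    have "nc (p @ s # alt t s m)" using that tl_nc nc_append[of p s "alt t s m"] by (simp add: tl_def)
    then show ?thesis using that tl_len tl_set Tm by (auto simp: Omega_iff tl_def)
  qed
  have av: "avec (p @ tl) = avec (p @ [s]) + avec tl" for p
    unfolding tl_def by (rule avec_append)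
  have tl0: "c \<bullet> avec tl = 0" unfolding tl_def by (rule tail)
  define S where "S = (\<lambda>p. avec (p @ tl)) ` set ps"
  have S_eq: "S = (+) (avec tl) ` ((\<lambda>p. avec (p @ [s])) ` set ps)"
    unfolding S_def image_image av by (simp add: add.commute)
  show ?thesis
  proof (rule facet_crit[where wz = "pz @ tl" and S = S])
    show "\<forall>w\<in>Omega T. 0 \<le> c \<bullet> avec w" using nn by simp
    show "pz @ tl \<in> Omega T" using word pz by simp
    show "c \<bullet> avec (pz @ tl) \<noteq> 0" using pz(4) tl0 by (simp add: av inner_add_right)
    show "S \<subseteq> avec ` Omega T" using ps word unfolding S_def by auto
    show "\<forall>x\<in>S. c \<bullet> x = 0" using ps tl0 unfolding S_def by (simp add: av inner_add_right)
    show "4 \<le> aff_dim S" using aff unfolding S_eq aff_dim_translation_eq .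
  qed
qed

lemma case12: assumes "T \<ge> 5" shows "defines_facet T (vector [1,0,0,0,0,0] :: real^6)"
proof (rule case_gen[OF assms, where s=1 and t=3 and pz="[1,2,1,2]" and ps="[[1,3,1,3],[1,3,2,3],[2,1,3,2],[2,3,1,3],[3,1,3,2]]"])
  show "\<forall>w. 0 \<le> (vector [1,0,0,0,0,0] :: real^6) \<bullet> avec w" by (simp add: avec_eq vec6_inner)
  show "(vector [1,0,0,0,0,0] :: real^6) \<bullet> avec (1 # alt 3 1 m) = 0" for m
    using alt_cnt[where i=1 and j=2 and s=1 and t=3 and n="Suc m"] by (simp add: avec_eq vec6_inner)
  have im: "(\<lambda>p. avec (p @ [1])) ` set [[1,3,1,3],[1,3,2,3],[2,1,3,2],[2,3,1,3],[3,1,3,2]] = {(vector [0,2,0,0,2,0] :: real^6),(vector [0,1,0,1,1,1] :: real^6),(vector [0,1,2,0,0,1] :: real^6),(vector [0,1,0,1,2,0] :: real^6),(vector [0,1,1,0,1,1] :: real^6)}"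
    by (simp add: avec_eq)
  have "aff_dim {(vector [0,2,0,0,2,0] :: real^6),(vector [0,1,0,1,1,1] :: real^6),(vector [0,1,2,0,0,1] :: real^6),(vector [0,1,0,1,2,0] :: real^6),(vector [0,1,1,0,1,1] :: real^6)} = 4"
  proof (rule aff5)
    show "distinct [(vector [0,2,0,0,2,0] :: real^6),(vector [0,1,0,1,1,1] :: real^6),(vector [0,1,2,0,0,1] :: real^6),(vector [0,1,0,1,2,0] :: real^6),(vector [0,1,1,0,1,1] :: real^6)]" by (simp add: vec6_eq)
  next
    fix u1 u2 u3 u4 u5 :: real
    assume h1: "u1 + u2 + u3 + u4 + u5 = 0"
    assume h2: "u1 *\<^sub>R (vector [0,2,0,0,2,0] :: real^6) + u2 *\<^sub>R (vector [0,1,0,1,1,1] :: real^6) + u3 *\<^sub>R (vector [0,1,2,0,0,1] :: real^6) + u4 *\<^sub>R (vector [0,1,0,1,2,0] :: real^6) + u5 *\<^sub>R (vector [0,1,1,0,1,1] :: real^6) = 0"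
    have c: "(u1 *\<^sub>R (vector [0,2,0,0,2,0] :: real^6) + u2 *\<^sub>R (vector [0,1,0,1,1,1] :: real^6) + u3 *\<^sub>R (vector [0,1,2,0,0,1] :: real^6) + u4 *\<^sub>R (vector [0,1,0,1,2,0] :: real^6) + u5 *\<^sub>R (vector [0,1,1,0,1,1] :: real^6)) $ 1 = 0" "(u1 *\<^sub>R (vector [0,2,0,0,2,0] :: real^6) + u2 *\<^sub>R (vector [0,1,0,1,1,1] :: real^6) + u3 *\<^sub>R (vector [0,1,2,0,0,1] :: real^6) + u4 *\<^sub>R (vector [0,1,0,1,2,0] :: real^6) + u5 *\<^sub>R (vector [0,1,1,0,1,1] :: real^6)) $ 2 = 0" "(u1 *\<^sub>R (vector [0,2,0,0,2,0] :: real^6) + u2 *\<^sub>R (vector [0,1,0,1,1,1] :: real^6) + u3 *\<^sub>R (vector [0,1,2,0,0,1] :: real^6) + u4 *\<^sub>R (vector [0,1,0,1,2,0] :: real^6) + u5 *\<^sub>R (vector [0,1,1,0,1,1] :: real^6)) $ 3 = 0" "(u1 *\<^sub>R (vector [0,2,0,0,2,0] :: real^6) + u2 *\<^sub>R (vector [0,1,0,1,1,1] :: real^6) + u3 *\<^sub>R (vector [0,1,2,0,0,1] :: real^6) + u4 *\<^sub>R (vector [0,1,0,1,2,0] :: real^6) + u5 *\<^sub>R (vector [0,1,1,0,1,1] :: real^6)) $ 4 = 0" "(u1 *\<^sub>R (vector [0,2,0,0,2,0] :: real^6) + u2 *\<^sub>R (vector [0,1,0,1,1,1] :: real^6) + u3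 *\<^sub>R (vector [0,1,2,0,0,1] :: real^6) + u4 *\<^sub>R (vector [0,1,0,1,2,0] :: real^6) + u5 *\<^sub>R (vector [0,1,1,0,1,1] :: real^6)) $ 5 = 0" "(u1 *\<^sub>R (vector [0,2,0,0,2,0] :: real^6) + u2 *\<^sub>R (vector [0,1,0,1,1,1] :: real^6) + u3 *\<^sub>R (vector [0,1,2,0,0,1] :: real^6) + u4 *\<^sub>R (vector [0,1,0,1,2,0] :: real^6) + u5 *\<^sub>R (vector [0,1,1,0,1,1] :: real^6)) $ 6 = 0"
      using h2 by simp_all
    note c' = c[simplified vector_add_component vector_scaleR_component v6 real_scaleR_def]
    show "u1 = 0 \<and> u2 = 0 \<and> u3 = 0 \<and> u4 = 0 \<and> u5 = 0"
      by (intro conjI) (use h1 c' in linarith)+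
  qed
  then show "aff_dim ((\<lambda>p. avec (p @ [1])) ` set [[1,3,1,3],[1,3,2,3],[2,1,3,2],[2,3,1,3],[3,1,3,2]]) \<ge> 4"
    unfolding im by simp
qed (simp_all add: avec_eq vec6_inner)

lemma case13: assumes "T \<ge> 5" shows "defines_facet T (vector [0,1,0,0,0,0] :: real^6)"
proof (rule case_gen[OF assms, where s=1 and t=2 and pz="[1,2,1,3]" and ps="[[1,2,1,2],[1,2,3,2],[2,1,2,3],[3,1,2,3],[3,2,1,2]]"])
  show "\<forall>w. 0 \<le> (vector [0,1,0,0,0,0] :: real^6) \<bullet> avec w" by (simp add: avec_eq vec6_inner)
  show "(vector [0,1,0,0,0,0] :: real^6) \<bullet> avec (1 # alt 2 1 m) = 0" for m
    using alt_cnt[where i=1 and j=3 and s=1 and t=2 and n="Suc m"] by (simp add: avec_eq vec6_inner)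
  have im: "(\<lambda>p. avec (p @ [1])) ` set [[1,2,1,2],[1,2,3,2],[2,1,2,3],[3,1,2,3],[3,2,1,2]] = {(vector [2,0,2,0,0,0] :: real^6),(vector [1,0,1,1,0,1] :: real^6),(vector [1,0,1,1,1,0] :: real^6),(vector [1,0,0,1,2,0] :: real^6),(vector [1,0,2,0,0,1] :: real^6)}"
    by (simp add: avec_eq)
  have "aff_dim {(vector [2,0,2,0,0,0] :: real^6),(vector [1,0,1,1,0,1] :: real^6),(vector [1,0,1,1,1,0] :: real^6),(vector [1,0,0,1,2,0] :: real^6),(vector [1,0,2,0,0,1] :: real^6)} = 4"
  proof (rule aff5)
    show "distinct [(vector [2,0,2,0,0,0] :: real^6),(vector [1,0,1,1,0,1] :: real^6),(vector [1,0,1,1,1,0] :: real^6),(vector [1,0,0,1,2,0] :: real^6),(vector [1,0,2,0,0,1] :: real^6)]" by (simp add: vec6_eq)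
  next
    fix u1 u2 u3 u4 u5 :: real
    assume h1: "u1 + u2 + u3 + u4 + u5 = 0"
    assume h2: "u1 *\<^sub>R (vector [2,0,2,0,0,0] :: real^6) + u2 *\<^sub>R (vector [1,0,1,1,0,1] :: real^6) + u3 *\<^sub>R (vector [1,0,1,1,1,0] :: real^6) + u4 *\<^sub>R (vector [1,0,0,1,2,0] :: real^6) + u5 *\<^sub>R (vector [1,0,2,0,0,1] :: real^6) = 0"
    have c: "(u1 *\<^sub>R (vector [2,0,2,0,0,0] :: real^6) + u2 *\<^sub>R (vector [1,0,1,1,0,1] :: real^6) + u3 *\<^sub>R (vector [1,0,1,1,1,0] :: real^6) + u4 *\<^sub>R (vector [1,0,0,1,2,0] :: real^6) + u5 *\<^sub>R (vector [1,0,2,0,0,1] :: real^6)) $ 1 = 0" "(u1 *\<^sub>R (vector [2,0,2,0,0,0] :: real^6) + u2 *\<^sub>R (vector [1,0,1,1,0,1] :: real^6) + u3 *\<^sub>R (vector [1,0,1,1,1,0] :: real^6) + u4 *\<^sub>R (vector [1,0,0,1,2,0] :: real^6) + u5 *\<^sub>R (vector [1,0,2,0,0,1] :: real^6)) $ 2 = 0" "(u1 *\<^sub>R (vector [2,0,2,0,0,0] :: real^6) + u2 *\<^sub>R (vector [1,0,1,1,0,1] :: real^6) + u3 *\<^sub>R (vector [1,0,1,1,1,0] :: real^6) + u4 *\<^sub>R (vector [1,0,0,1,2,0] :: real^6) + u5 *\<^sub>R (vector [1,0,2,0,0,1] :: real^6)) $ 3 = 0" "(u1 *\<^sub>R (vector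 [2,0,2,0,0,0] :: real^6) + u2 *\<^sub>R (vector [1,0,1,1,0,1] :: real^6) + u3 *\<^sub>R (vector [1,0,1,1,1,0] :: real^6) + u4 *\<^sub>R (vector [1,0,0,1,2,0] :: real^6) + u5 *\<^sub>R (vector [1,0,2,0,0,1] :: real^6)) $ 4 = 0" "(u1 *\<^sub>R (vector [2,0,2,0,0,0] :: real^6) + u2 *\<^sub>R (vector [1,0,1,1,0,1] :: real^6) + u3 *\<^sub>R (vector [1,0,1,1,1,0] :: real^6) + u4 *\<^sub>R (vector [1,0,0,1,2,0] :: real^6) + u5 *\<^sub>R (vector [1,0,2,0,0,1] :: real^6)) $ 5 = 0" "(u1 *\<^sub>R (vector [2,0,2,0,0,0] :: real^6) + u2 *\<^sub>R (vector [1,0,1,1,0,1] :: real^6) + u3 *\<^sub>R (vector [1,0,1,1,1,0] :: real^6) + u4 *\<^sub>R (vector [1,0,0,1,2,0] :: real^6) + u5 *\<^sub>R (vector [1,0,2,0,0,1] :: real^6)) $ 6 = 0"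
      using h2 by simp_all
    note c' = c[simplified vector_add_component vector_scaleR_component v6 real_scaleR_def]
    show "u1 = 0 \<and> u2 = 0 \<and> u3 = 0 \<and> u4 = 0 \<and> u5 = 0"
      by (intro conjI) (use h1 c' in linarith)+
  qed
  then show "aff_dim ((\<lambda>p. avec (p @ [1])) ` set [[1,2,1,2],[1,2,3,2],[2,1,2,3],[3,1,2,3],[3,2,1,2]]) \<ge> 4"
    unfolding im by simp
qed (simp_all add: avec_eq vec6_inner)

lemma case21: assumes "T \<ge> 5" shows "defines_facet T (vector [0,0,1,0,0,0] :: real^6)"
proof (rule case_gen[OF assms, where s=2 and t=3 and pz="[1,2,1,3]" and ps="[[1,2,3,1],[1,3,1,3],[1,3,2,3],[2,3,1,3],[3,1,2,3]]"])
  show "\<forall>w. 0 \<le> (vector [0,0,1,0,0,0] :: real^6) \<bullet> avec w" by (simp add: avec_eq vec6_inner)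
  show "(vector [0,0,1,0,0,0] :: real^6) \<bullet> avec (2 # alt 3 2 m) = 0" for m
    using alt_cnt[where i=2 and j=1 and s=2 and t=3 and n="Suc m"] by (simp add: avec_eq vec6_inner)
  have im: "(\<lambda>p. avec (p @ [2])) ` set [[1,2,3,1],[1,3,1,3],[1,3,2,3],[2,3,1,3],[3,1,2,3]] = {(vector [2,0,0,1,1,0] :: real^6),(vector [0,2,0,0,1,1] :: real^6),(vector [0,1,0,1,0,2] :: real^6),(vector [0,1,0,1,1,1] :: real^6),(vector [1,0,0,1,1,1] :: real^6)}"
    by (simp add: avec_eq)
  have "aff_dim {(vector [2,0,0,1,1,0] :: real^6),(vector [0,2,0,0,1,1] :: real^6),(vector [0,1,0,1,0,2] :: real^6),(vector [0,1,0,1,1,1] :: real^6),(vector [1,0,0,1,1,1] :: real^6)} = 4"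
  proof (rule aff5)
    show "distinct [(vector [2,0,0,1,1,0] :: real^6),(vector [0,2,0,0,1,1] :: real^6),(vector [0,1,0,1,0,2] :: real^6),(vector [0,1,0,1,1,1] :: real^6),(vector [1,0,0,1,1,1] :: real^6)]" by (simp add: vec6_eq)
  next
    fix u1 u2 u3 u4 u5 :: real
    assume h1: "u1 + u2 + u3 + u4 + u5 = 0"
    assume h2: "u1 *\<^sub>R (vector [2,0,0,1,1,0] :: real^6) + u2 *\<^sub>R (vector [0,2,0,0,1,1] :: real^6) + u3 *\<^sub>R (vector [0,1,0,1,0,2] :: real^6) + u4 *\<^sub>R (vector [0,1,0,1,1,1] :: real^6) + u5 *\<^sub>R (vector [1,0,0,1,1,1] :: real^6) = 0"
    have c: "(u1 *\<^sub>R (vector [2,0,0,1,1,0] :: real^6) + u2 *\<^sub>R (vector [0,2,0,0,1,1] :: real^6) + u3 *\<^sub>R (vector [0,1,0,1,0,2] :: real^6) + u4 *\<^sub>R (vector [0,1,0,1,1,1] :: real^6) + u5 *\<^sub>R (vector [1,0,0,1,1,1] :: real^6)) $ 1 = 0" "(u1 *\<^sub>R (vector [2,0,0,1,1,0] :: real^6) + u2 *\<^sub>R (vector [0,2,0,0,1,1] :: real^6) + u3 *\<^sub>R (vector [0,1,0,1,0,2] :: real^6) + u4 *\<^sub>R (vector [0,1,0,1,1,1] :: real^6) + u5 *\<^sub>R (vector [1,0,0,1,1,1] :: real^6)) $ 2 = 0" "(u1 *\<^sub>R (vector [2,0,0,1,1,0] :: real^6) + u2 *\<^sub>R (vector [0,2,0,0,1,1]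 :: real^6) + u3 *\<^sub>R (vector [0,1,0,1,0,2] :: real^6) + u4 *\<^sub>R (vector [0,1,0,1,1,1] :: real^6) + u5 *\<^sub>R (vector [1,0,0,1,1,1] :: real^6)) $ 3 = 0" "(u1 *\<^sub>R (vector [2,0,0,1,1,0] :: real^6) + u2 *\<^sub>R (vector [0,2,0,0,1,1] :: real^6) + u3 *\<^sub>R (vector [0,1,0,1,0,2] :: real^6) + u4 *\<^sub>R (vector [0,1,0,1,1,1] :: real^6) + u5 *\<^sub>R (vector [1,0,0,1,1,1] :: real^6)) $ 4 = 0" "(u1 *\<^sub>R (vector [2,0,0,1,1,0] :: real^6) + u2 *\<^sub>R (vector [0,2,0,0,1,1] :: real^6) + u3 *\<^sub>R (vector [0,1,0,1,0,2] :: real^6) + u4 *\<^sub>R (vector [0,1,0,1,1,1] :: real^6) + u5 *\<^sub>R (vector [1,0,0,1,1,1] :: real^6)) $ 5 = 0" "(u1 *\<^sub>R (vector [2,0,0,1,1,0] :: real^6) + u2 *\<^sub>R (vector [0,2,0,0,1,1] :: real^6) + u3 *\<^sub>R (vector [0,1,0,1,0,2] :: real^6) + u4 *\<^sub>R (vector [0,1,0,1,1,1] :: real^6) + u5 *\<^sub>R (vector [1,0,0,1,1,1] :: real^6)) $ 6 = 0"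
      using h2 by simp_all
    note c' = c[simplified vector_add_component vector_scaleR_component v6 real_scaleR_def]
    show "u1 = 0 \<and> u2 = 0 \<and> u3 = 0 \<and> u4 = 0 \<and> u5 = 0"
      by (intro conjI) (use h1 c' in linarith)+
  qed
  then show "aff_dim ((\<lambda>p. avec (p @ [2])) ` set [[1,2,3,1],[1,3,1,3],[1,3,2,3],[2,3,1,3],[3,1,2,3]]) \<ge> 4"
    unfolding im by simp
qed (simp_all add: avec_eq vec6_inner)

lemma case23: assumes "T \<ge> 5" shows "defines_facet T (vector [0,0,0,1,0,0] :: real^6)"
proof (rule case_gen[OF assms, where s=2 and t=1 and pz="[1,2,3,1]" and ps="[[1,2,1,3],[1,3,1,3],[2,1,2,1],[3,1,2,1],[3,2,1,3]]"])
  show "\<forall>w. 0 \<le> (vector [0,0,0,1,0,0] :: real^6) \<bullet> avec w" by (simp add: avec_eq vec6_inner)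
  show "(vector [0,0,0,1,0,0] :: real^6) \<bullet> avec (2 # alt 1 2 m) = 0" for m
    using alt_cnt[where i=2 and j=3 and s=2 and t=1 and n="Suc m"] by (simp add: avec_eq vec6_inner)
  have im: "(\<lambda>p. avec (p @ [2])) ` set [[1,2,1,3],[1,3,1,3],[2,1,2,1],[3,1,2,1],[3,2,1,3]] = {(vector [1,1,1,0,0,1] :: real^6),(vector [0,2,0,0,1,1] :: real^6),(vector [2,0,2,0,0,0] :: real^6),(vector [2,0,1,0,1,0] :: real^6),(vector [0,1,1,0,0,2] :: real^6)}"
    by (simp add: avec_eq)
  have "aff_dim {(vector [1,1,1,0,0,1] :: real^6),(vector [0,2,0,0,1,1] :: real^6),(vector [2,0,2,0,0,0] :: real^6),(vector [2,0,1,0,1,0] :: real^6),(vector [0,1,1,0,0,2] :: real^6)} = 4"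
  proof (rule aff5)
    show "distinct [(vector [1,1,1,0,0,1] :: real^6),(vector [0,2,0,0,1,1] :: real^6),(vector [2,0,2,0,0,0] :: real^6),(vector [2,0,1,0,1,0] :: real^6),(vector [0,1,1,0,0,2] :: real^6)]" by (simp add: vec6_eq)
  next
    fix u1 u2 u3 u4 u5 :: real
    assume h1: "u1 + u2 + u3 + u4 + u5 = 0"
    assume h2: "u1 *\<^sub>R (vector [1,1,1,0,0,1] :: real^6) + u2 *\<^sub>R (vector [0,2,0,0,1,1] :: real^6) + u3 *\<^sub>R (vector [2,0,2,0,0,0] :: real^6) + u4 *\<^sub>R (vector [2,0,1,0,1,0] :: real^6) + u5 *\<^sub>R (vector [0,1,1,0,0,2] :: real^6) = 0"
    have c: "(u1 *\<^sub>R (vector [1,1,1,0,0,1] :: real^6) + u2 *\<^sub>R (vector [0,2,0,0,1,1] :: real^6) + u3 *\<^sub>R (vector [2,0,2,0,0,0] :: real^6) + u4 *\<^sub>R (vector [2,0,1,0,1,0] :: real^6) + u5 *\<^sub>R (vector [0,1,1,0,0,2] :: real^6)) $ 1 = 0" "(u1 *\<^sub>R (vector [1,1,1,0,0,1] :: real^6) + u2 *\<^sub>R (vector [0,2,0,0,1,1] :: real^6) + u3 *\<^sub>R (vector [2,0,2,0,0,0] :: real^6) + u4 *\<^sub>R (vector [2,0,1,0,1,0] :: real^6) + u5 *\<^sub>R (vector [0,1,1,0,0,2] :: real^6)) $ 2 = 0" "(u1 *\<^sub>R (vector [1,1,1,0,0,1] :: real^6) + u2 *\<^sub>R (vector [0,2,0,0,1,1]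 :: real^6) + u3 *\<^sub>R (vector [2,0,2,0,0,0] :: real^6) + u4 *\<^sub>R (vector [2,0,1,0,1,0] :: real^6) + u5 *\<^sub>R (vector [0,1,1,0,0,2] :: real^6)) $ 3 = 0" "(u1 *\<^sub>R (vector [1,1,1,0,0,1] :: real^6) + u2 *\<^sub>R (vector [0,2,0,0,1,1] :: real^6) + u3 *\<^sub>R (vector [2,0,2,0,0,0] :: real^6) + u4 *\<^sub>R (vector [2,0,1,0,1,0] :: real^6) + u5 *\<^sub>R (vector [0,1,1,0,0,2] :: real^6)) $ 4 = 0" "(u1 *\<^sub>R (vector [1,1,1,0,0,1] :: real^6) + u2 *\<^sub>R (vector [0,2,0,0,1,1] :: real^6) + u3 *\<^sub>R (vector [2,0,2,0,0,0] :: real^6) + u4 *\<^sub>R (vector [2,0,1,0,1,0] :: real^6) + u5 *\<^sub>R (vector [0,1,1,0,0,2] :: real^6)) $ 5 = 0" "(u1 *\<^sub>R (vector [1,1,1,0,0,1] :: real^6) + u2 *\<^sub>R (vector [0,2,0,0,1,1] :: real^6) + u3 *\<^sub>R (vector [2,0,2,0,0,0] :: real^6) + u4 *\<^sub>R (vector [2,0,1,0,1,0] :: real^6) + u5 *\<^sub>R (vector [0,1,1,0,0,2] :: real^6)) $ 6 = 0"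
      using h2 by simp_all
    note c' = c[simplified vector_add_component vector_scaleR_component v6 real_scaleR_def]
    show "u1 = 0 \<and> u2 = 0 \<and> u3 = 0 \<and> u4 = 0 \<and> u5 = 0"
      by (intro conjI) (use h1 c' in linarith)+
  qed
  then show "aff_dim ((\<lambda>p. avec (p @ [2])) ` set [[1,2,1,3],[1,3,1,3],[2,1,2,1],[3,1,2,1],[3,2,1,3]]) \<ge> 4"
    unfolding im by simp
qed (simp_all add: avec_eq vec6_inner)

lemma case31: assumes "T \<ge> 5" shows "defines_facet T (vector [0,0,0,0,1,0] :: real^6)"
proof (rule case_gen[OF assms, where s=3 and t=2 and pz="[1,2,3,1]" and ps="[[1,2,1,2],[1,2,3,2],[1,3,2,1],[2,1,2,1],[3,2,1,2]]"])
  show "\<forall>w. 0 \<le> (vector [0,0,0,0,1,0] :: real^6) \<bullet> avec w" by (simp add: avec_eq vec6_inner)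
  show "(vector [0,0,0,0,1,0] :: real^6) \<bullet> avec (3 # alt 2 3 m) = 0" for m
    using alt_cnt[where i=3 and j=1 and s=3 and t=2 and n="Suc m"] by (simp add: avec_eq vec6_inner)
  have im: "(\<lambda>p. avec (p @ [3])) ` set [[1,2,1,2],[1,2,3,2],[1,3,2,1],[2,1,2,1],[3,2,1,2]] = {(vector [2,0,1,1,0,0] :: real^6),(vector [1,0,0,2,0,1] :: real^6),(vector [0,2,1,0,0,1] :: real^6),(vector [1,1,2,0,0,0] :: real^6),(vector [1,0,1,1,0,1] :: real^6)}"
    by (simp add: avec_eq)
  have "aff_dim {(vector [2,0,1,1,0,0] :: real^6),(vector [1,0,0,2,0,1] :: real^6),(vector [0,2,1,0,0,1] :: real^6),(vector [1,1,2,0,0,0] :: real^6),(vector [1,0,1,1,0,1] :: real^6)} = 4"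
  proof (rule aff5)
    show "distinct [(vector [2,0,1,1,0,0] :: real^6),(vector [1,0,0,2,0,1] :: real^6),(vector [0,2,1,0,0,1] :: real^6),(vector [1,1,2,0,0,0] :: real^6),(vector [1,0,1,1,0,1] :: real^6)]" by (simp add: vec6_eq)
  next
    fix u1 u2 u3 u4 u5 :: real
    assume h1: "u1 + u2 + u3 + u4 + u5 = 0"
    assume h2: "u1 *\<^sub>R (vector [2,0,1,1,0,0] :: real^6) + u2 *\<^sub>R (vector [1,0,0,2,0,1] :: real^6) + u3 *\<^sub>R (vector [0,2,1,0,0,1] :: real^6) + u4 *\<^sub>R (vector [1,1,2,0,0,0] :: real^6) + u5 *\<^sub>R (vector [1,0,1,1,0,1] :: real^6) = 0"
    have c: "(u1 *\<^sub>R (vector [2,0,1,1,0,0] :: real^6) + u2 *\<^sub>R (vector [1,0,0,2,0,1] :: real^6) + u3 *\<^sub>R (vector [0,2,1,0,0,1] :: real^6) + u4 *\<^sub>R (vector [1,1,2,0,0,0] :: real^6) + u5 *\<^sub>R (vector [1,0,1,1,0,1] :: real^6)) $ 1 = 0" "(u1 *\<^sub>R (vector [2,0,1,1,0,0] :: real^6) + u2 *\<^sub>R (vector [1,0,0,2,0,1] :: real^6) + u3 *\<^sub>R (vector [0,2,1,0,0,1] :: real^6) + u4 *\<^sub>R (vector [1,1,2,0,0,0] :: real^6) + u5 *\<^sub>R (vector [1,0,1,1,0,1] :: real^6)) $ 2 = 0" "(u1 *\<^sub>R (vector [2,0,1,1,0,0] :: real^6) + u2 *\<^sub>R (vector [1,0,0,2,0,1]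 :: real^6) + u3 *\<^sub>R (vector [0,2,1,0,0,1] :: real^6) + u4 *\<^sub>R (vector [1,1,2,0,0,0] :: real^6) + u5 *\<^sub>R (vector [1,0,1,1,0,1] :: real^6)) $ 3 = 0" "(u1 *\<^sub>R (vector [2,0,1,1,0,0] :: real^6) + u2 *\<^sub>R (vector [1,0,0,2,0,1] :: real^6) + u3 *\<^sub>R (vector [0,2,1,0,0,1] :: real^6) + u4 *\<^sub>R (vector [1,1,2,0,0,0] :: real^6) + u5 *\<^sub>R (vector [1,0,1,1,0,1] :: real^6)) $ 4 = 0" "(u1 *\<^sub>R (vector [2,0,1,1,0,0] :: real^6) + u2 *\<^sub>R (vector [1,0,0,2,0,1] :: real^6) + u3 *\<^sub>R (vector [0,2,1,0,0,1] :: real^6) + u4 *\<^sub>R (vector [1,1,2,0,0,0] :: real^6) + u5 *\<^sub>R (vector [1,0,1,1,0,1] :: real^6)) $ 5 = 0" "(u1 *\<^sub>R (vector [2,0,1,1,0,0] :: real^6) + u2 *\<^sub>R (vector [1,0,0,2,0,1] :: real^6) + u3 *\<^sub>R (vector [0,2,1,0,0,1] :: real^6) + u4 *\<^sub>R (vector [1,1,2,0,0,0] :: real^6) + u5 *\<^sub>R (vector [1,0,1,1,0,1] :: real^6)) $ 6 = 0"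
      using h2 by simp_all
    note c' = c[simplified vector_add_component vector_scaleR_component v6 real_scaleR_def]
    show "u1 = 0 \<and> u2 = 0 \<and> u3 = 0 \<and> u4 = 0 \<and> u5 = 0"
      by (intro conjI) (use h1 c' in linarith)+
  qed
  then show "aff_dim ((\<lambda>p. avec (p @ [3])) ` set [[1,2,1,2],[1,2,3,2],[1,3,2,1],[2,1,2,1],[3,2,1,2]]) \<ge> 4"
    unfolding im by simp
qed (simp_all add: avec_eq vec6_inner)

lemma case32: assumes "T \<ge> 5" shows "defines_facet T (vector [0,0,0,0,0,1] :: real^6)"
proof (rule case_gen[OF assms, where s=3 and t=1 and pz="[1,2,3,2]" and ps="[[1,2,1,2],[1,2,3,1],[2,1,2,1],[2,3,1,2],[3,1,2,1]]"])
  show "\<forall>w. 0 \<le> (vector [0,0,0,0,0,1] :: real^6) \<bullet> avec w" by (simp add: avec_eq vec6_inner)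
  show "(vector [0,0,0,0,0,1] :: real^6) \<bullet> avec (3 # alt 1 3 m) = 0" for m
    using alt_cnt[where i=3 and j=2 and s=3 and t=1 and n="Suc m"] by (simp add: avec_eq vec6_inner)
  have im: "(\<lambda>p. avec (p @ [3])) ` set [[1,2,1,2],[1,2,3,1],[2,1,2,1],[2,3,1,2],[3,1,2,1]] = {(vector [2,0,1,1,0,0] :: real^6),(vector [1,1,0,1,1,0] :: real^6),(vector [1,1,2,0,0,0] :: real^6),(vector [1,0,0,2,1,0] :: real^6),(vector [1,1,1,0,1,0] :: real^6)}"
    by (simp add: avec_eq)
  have "aff_dim {(vector [2,0,1,1,0,0] :: real^6),(vector [1,1,0,1,1,0] :: real^6),(vector [1,1,2,0,0,0] :: real^6),(vector [1,0,0,2,1,0] :: real^6),(vector [1,1,1,0,1,0] :: real^6)} = 4"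
  proof (rule aff5)
    show "distinct [(vector [2,0,1,1,0,0] :: real^6),(vector [1,1,0,1,1,0] :: real^6),(vector [1,1,2,0,0,0] :: real^6),(vector [1,0,0,2,1,0] :: real^6),(vector [1,1,1,0,1,0] :: real^6)]" by (simp add: vec6_eq)
  next
    fix u1 u2 u3 u4 u5 :: real
    assume h1: "u1 + u2 + u3 + u4 + u5 = 0"
    assume h2: "u1 *\<^sub>R (vector [2,0,1,1,0,0] :: real^6) + u2 *\<^sub>R (vector [1,1,0,1,1,0] :: real^6) + u3 *\<^sub>R (vector [1,1,2,0,0,0] :: real^6) + u4 *\<^sub>R (vector [1,0,0,2,1,0] :: real^6) + u5 *\<^sub>R (vector [1,1,1,0,1,0] :: real^6) = 0"
    have c: "(u1 *\<^sub>R (vector [2,0,1,1,0,0] :: real^6) + u2 *\<^sub>R (vector [1,1,0,1,1,0] :: real^6) + u3 *\<^sub>R (vector [1,1,2,0,0,0] :: real^6) + u4 *\<^sub>R (vector [1,0,0,2,1,0] :: real^6) + u5 *\<^sub>R (vector [1,1,1,0,1,0] :: real^6)) $ 1 = 0" "(u1 *\<^sub>R (vector [2,0,1,1,0,0] :: real^6) + u2 *\<^sub>R (vector [1,1,0,1,1,0] :: real^6) + u3 *\<^sub>R (vector [1,1,2,0,0,0] :: real^6) + u4 *\<^sub>R (vector [1,0,0,2,1,0] :: real^6) + u5 *\<^sub>R (vector [1,1,1,0,1,0] :: real^6)) $ 2 = 0" "(u1 *\<^sub>R (vector [2,0,1,1,0,0] :: real^6) + u2 *\<^sub>R (vector [1,1,0,1,1,0]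 :: real^6) + u3 *\<^sub>R (vector [1,1,2,0,0,0] :: real^6) + u4 *\<^sub>R (vector [1,0,0,2,1,0] :: real^6) + u5 *\<^sub>R (vector [1,1,1,0,1,0] :: real^6)) $ 3 = 0" "(u1 *\<^sub>R (vector [2,0,1,1,0,0] :: real^6) + u2 *\<^sub>R (vector [1,1,0,1,1,0] :: real^6) + u3 *\<^sub>R (vector [1,1,2,0,0,0] :: real^6) + u4 *\<^sub>R (vector [1,0,0,2,1,0] :: real^6) + u5 *\<^sub>R (vector [1,1,1,0,1,0] :: real^6)) $ 4 = 0" "(u1 *\<^sub>R (vector [2,0,1,1,0,0] :: real^6) + u2 *\<^sub>R (vector [1,1,0,1,1,0] :: real^6) + u3 *\<^sub>R (vector [1,1,2,0,0,0] :: real^6) + u4 *\<^sub>R (vector [1,0,0,2,1,0] :: real^6) + u5 *\<^sub>R (vector [1,1,1,0,1,0] :: real^6)) $ 5 = 0" "(u1 *\<^sub>R (vector [2,0,1,1,0,0] :: real^6) + u2 *\<^sub>R (vector [1,1,0,1,1,0] :: real^6) + u3 *\<^sub>R (vector [1,1,2,0,0,0] :: real^6) + u4 *\<^sub>R (vector [1,0,0,2,1,0] :: real^6) + u5 *\<^sub>R (vector [1,1,1,0,1,0] :: real^6)) $ 6 = 0"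
      using h2 by simp_all
    note c' = c[simplified vector_add_component vector_scaleR_component v6 real_scaleR_def]
    show "u1 = 0 \<and> u2 = 0 \<and> u3 = 0 \<and> u4 = 0 \<and> u5 = 0"
      by (intro conjI) (use h1 c' in linarith)+
  qed
  then show "aff_dim ((\<lambda>p. avec (p @ [3])) ` set [[1,2,1,2],[1,2,3,1],[2,1,2,1],[2,3,1,2],[3,1,2,1]]) \<ge> 4"
    unfolding im by simp
qed (simp_all add: avec_eq vec6_inner)

theorem proposition5:
  fixes T :: nat and \<sigma> :: "nat \<Rightarrow> nat"
  assumes "T \<ge> 5" and "\<sigma> permutes {1, 2, 3}"
  shows "defines_facet T (act \<sigma> (vector [1, 0, 0, 0, 0, 0]))"
proof -
  have inj: "inj \<sigma>" using assms(2) by (rule permutes_inj)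
  have r: "\<sigma> 1 \<in> {1,2,3}" "\<sigma> 2 \<in> {1,2,3}" "\<sigma> 3 \<in> {1,2,3}"
    using permutes_in_image[OF assms(2)] by auto
  have d: "\<sigma> 1 \<noteq> \<sigma> 2" "\<sigma> 1 \<noteq> \<sigma> 3" "\<sigma> 2 \<noteq> \<sigma> 3"
    by (simp_all add: inj_eq[OF inj])
  have r1: "\<sigma> 1 = 1 \<or> \<sigma> 1 = 2 \<or> \<sigma> 1 = 3" and r2: "\<sigma> 2 = 1 \<or> \<sigma> 2 = 2 \<or> \<sigma> 2 = 3"
    and r3: "\<sigma> 3 = 1 \<or> \<sigma> 3 = 2 \<or> \<sigma> 3 = 3" using r by auto
  have "act \<sigma> (vector [1, 0, 0, 0, 0, 0]) \<in> {vector [1,0,0,0,0,0], vector [0,1,0,0,0,0],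
     vector [0,0,1,0,0,0], vector [0,0,0,1,0,0], vector [0,0,0,0,1,0], vector [0,0,0,0,0,1]}"
    using r1 r2 r3 d by (elim disjE) (simp_all add: act_def coord_def v6)
  then show ?thesis
    using case12[OF assms(1)] case13[OF assms(1)] case21[OF assms(1)]
      case23[OF assms(1)] case31[OF assms(1)] case32[OF assms(1)] by auto
qed

end
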